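(* Let $\theta=\frac{a}{b}$ with $a,b$ positive integers, $a>b$. Let $w$ be a positive function on $(0,+\infty)$ such that $x^kw(x)$ is integrable on $(0,+\infty)$ for every integer $k\geq 0$, and let $p_j,q_j$ ($j=0,1,2,\dots$) be the biorthogonal polynomials defined in the context. Then there exist real coefficients $u_0(k),\dots,u_{a+b}(k)$ and $v_0(k),\dots,v_{a+b}(k)$ (for every integer $k\geq 0$) such that for all $x$, \begin{align*} x^ap_k(x) &=u_0(k)p_{k+a}(x) + u_1(k)p_{k+a-1}(x)+\dots +u_{a+b}(k)p_{k-b}(x),\\ x^bq_k(x) &=v_0(k)q_{k+b}(x) + v_1(k)q_{k+b-1}(x)+\dots +v_{a+b}(k)q_{k-a}(x), \end{align*} with the convention $p_j=q_j=0$ for $j<0$, and these coefficients satisfy $$u_j(k)=v_{a+b-j}(k+a-j)$$ (whenever $k+a-j\geq 0$). Moreover, for every integer $n\geq 1$, every complex $x$ and every $y\geq 0$ (with $y^\theta\geq 0$) such that $x^a\neq y^a$, the Christoffel–Darboux formula $$\sum_{k=0}^{n-1}p_k(x)q_k(y^\theta)=\frac{1}{x^a-y^a}\left(\sum_{\ell=1}^{a}\sum_{k=n-\ell}^{n-1}u_{a-\ell}(k)p_{k+\ell}(x)q_k(y^\theta)-\sum_{\ell=1}^b\sum_{k=n-\ell}^{n-1}u_{a+\ell}(k+\ell)p_k(x)q_{k+\ell}(y^\theta)\right)$$ holds, where terms involving a polynomial with negative index are zero.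
   Context: For $\theta\geq 1$ and $w$ as in the claim, the biorthogonal polynomials $p_j(x)=\kappa_jx^j+\dots$ and $q_j(x)=\kappa_jx^j+\dots$ are the (unique) polynomials of exact degree $j$, with equal positive leading coefficients $\kappa_j$, satisfying $\int_0^{+\infty}p_j(x)q_k(x^\theta)w(x)\,dx=\delta_{jk}$ for all $j,k\geq 0$. (Existence and uniqueness holds since the bimoment matrices $\left(\int_0^\infty x^{k+j\theta}w(x)dx\right)_{j,k=0}^{n-1}$ are nonsingular.) *)

theory Defs
  imports "HOL-Analysis.Analysis" "HOL-Computational_Algebra.Polynomial"
begin

definition cpoly :: "real poly \<Rightarrow> complex \<Rightarrow> complex" where
  "cpoly P z = poly (map_poly complex_of_real P) z"

end

theory Submission
  imports Defs
begin


lemma pow_le1: "(x::real) \<ge> 0 \<Longrightarrow> i \<le> d \<Longrightarrow> x^i \<le> 1 + x^d"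
proof (cases "x \<le> 1")
  case True
  assume "x \<ge> 0" then have "x^i \<le> 1" using True by (simp add: power_le_one)
  moreover have "x^d \<ge> 0" using \<open>x\<ge>0\<close> by simp
  ultimately show ?thesis by linarith
next
  case False
  assume "i \<le> d"
  then have "x^i \<le> x^d" using False by (intro power_increasing) auto
  then show ?thesis by simp
qed

lemma powr_le1: "(x::real) > 0 \<Longrightarrow> 0 \<le> r \<Longrightarrow> r \<le> real M \<Longrightarrow> x powr r \<le> 1 + x^M"
proof (cases "x \<le> 1")
  case True
  assume "x > 0" "0 \<le> r"
  then have "x powr r \<le> 1" using True using powr_mono2[of r x 1] by simp
  moreover have "x^M \<ge> 0" using \<open>x>0\<close> by simp
  ultimately show ?thesis by linarith
next
  case False
  assume "x > 0" "r \<le> real M"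
  then have "x powr r \<le> x powr (real M)" using False by (intro powr_mono) auto
  also have "\<dots> = x^M" using \<open>x > 0\<close> by (simp add: powr_realpow)
  finally show ?thesis by simp
qed

lemma poly_bound: "(x::real) \<ge> 0 \<Longrightarrow> \<bar>poly P x\<bar> \<le> (\<Sum>i\<le>degree P. \<bar>coeff P i\<bar>) * (1 + x^degree P)"
proof -
  assume x: "x \<ge> 0"
  have "\<bar>poly P x\<bar> = \<bar>\<Sum>i\<le>degree P. coeff P i * x^i\<bar>" by (simp add: poly_altdef)
  also have "\<dots> \<le> (\<Sum>i\<le>degree P. \<bar>coeff P i * x^i\<bar>)" by (rule sum_abs)
  also have "\<dots> \<le> (\<Sum>i\<le>degree P. \<bar>coeff P i\<bar> * (1 + x^degree P))"
    by (rule sum_mono) (use x pow_le1 in \<open>auto simp: abs_mult intro!: mult_left_mono\<close>)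
  also have "\<dots> = (\<Sum>i\<le>degree P. \<bar>coeff P i\<bar>) * (1 + x^degree P)" by (simp add: sum_distrib_right)
  finally show ?thesis .
qed

locale bi = fixes w :: "real \<Rightarrow> real" and \<theta> :: real
  assumes th: "\<theta> \<ge> 0" and wpos: "\<And>x. x>0 \<Longrightarrow> w x > 0"
   and mom: "\<And>k::nat. set_integrable lborel {0<..} (\<lambda>x. x^k * w x)"
begin

definition B where "B f g = (LINT x:{0<..}|lborel. poly f x * poly g (x powr \<theta>) * w x)"

lemma wmeas: "set_borel_measurable lborel {0<..} w"
  using mom[of 0] unfolding set_integrable_def set_borel_measurable_def by (simp add: borel_measurable_integrable)

lemma integ: "set_integrable lborel {0<..} (\<lambda>x. poly f x * poly g (x powr \<theta>) * w x)"
proof (rule set_integrable_bound)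
  define Cf where "Cf = (\<Sum>i\<le>degree f. \<bar>coeff f i\<bar>)"
  define Cg where "Cg = (\<Sum>i\<le>degree g. \<bar>coeff g i\<bar>)"
  define d where "d = degree f"
  define M where "M = nat \<lceil>\<theta> * degree g\<rceil>"
  show "set_integrable lborel {0<..} (\<lambda>x. Cf * Cg * (2 * (x^0 * w x) + 2 * (x^d * w x) + x^M * w x + x^(d+M) * w x))"
    by (intro set_integrable_mult_right set_integral_add mom) 
  show "set_borel_measurable lborel {0<..} (\<lambda>x. poly f x * poly g (x powr \<theta>) * w x)"
  proof -
    have e: "(\<lambda>x. indicator {0<..} x *\<^sub>R (poly f x * poly g (x powr \<theta>) * w x)) = 
        (\<lambda>x. (poly f x * poly g (x powr \<theta>)) * (indicator {0<..} x *\<^sub>R w x))" by (auto simp: fun_eq_iff indicator_def)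
    have m1: "(\<lambda>x. indicator {0<..} x *\<^sub>R w x) \<in> borel_measurable lborel" using wmeas by (simp add: set_borel_measurable_def)
    have pm: "\<And>h::real poly. poly h \<in> borel_measurable borel"
      by (intro borel_measurable_continuous_onI) (use continuous_on_poly[OF continuous_on_id] in blast)
    have "(\<lambda>x. x powr \<theta>) \<in> borel_measurable borel" by measurable
    then have "(\<lambda>x. poly g (x powr \<theta>)) \<in> borel_measurable borel" using measurable_compose[OF _ pm] by blast
    then have m2: "(\<lambda>x. poly f x * poly g (x powr \<theta>)) \<in> borel_measurable lborel" using pm[of f] by simp
    show ?thesis unfolding set_borel_measurable_def e using borel_measurable_times[OF m2 m1] by simp
  qed
  show "AE x in lborel. x \<in> {0<..} \<longrightarrow> norm (poly f x * poly g (x powr \<theta>) * w x)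
     \<le> norm (Cf * Cg * (2 * (x^0 * w x) + 2 * (x^d * w x) + x^M * w x + x^(d+M) * w x))"
  proof (rule AE_I2, rule impI)
    fix x :: real assume "x \<in> {0<..}"
    then have x: "x > 0" by simp
    have Cf: "Cf \<ge> 0" "Cg \<ge> 0" unfolding Cf_def Cg_def by (auto intro: sum_nonneg)
    have b1: "\<bar>poly f x\<bar> \<le> Cf * (1 + x^d)" using poly_bound[of x f] x unfolding Cf_def d_def by simp
    have b2: "\<bar>poly g (x powr \<theta>)\<bar> \<le> Cg * (1 + (x powr \<theta>)^degree g)" 
      using poly_bound[of "x powr \<theta>" g] unfolding Cg_def by simp
    have "(x powr \<theta>)^degree g = x powr (\<theta> * degree g)" using x by (simp add: powr_realpow[symmetric] powr_powr)
    also have "\<dots> \<le> 1 + x^M" unfolding M_def using x th by (intro powr_le1) auto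
    finally have b3: "\<bar>poly g (x powr \<theta>)\<bar> \<le> Cg * (2 + x^M)" using b2 Cf by (smt (verit) mult_left_mono)
    have wx: "w x > 0" using wpos x by simp
    have "norm (poly f x * poly g (x powr \<theta>) * w x) = \<bar>poly f x\<bar> * \<bar>poly g (x powr \<theta>)\<bar> * w x"
      using wx by (simp add: abs_mult)
    also have "\<dots> \<le> (Cf * (1 + x^d)) * (Cg * (2 + x^M)) * w x"
      using b1 b3 wx by (intro mult_right_mono mult_mono) auto
    also have "\<dots> = Cf * Cg * (2 * (x^0 * w x) + 2 * (x^d * w x) + x^M * w x + x^(d+M) * w x)"
      by (simp add: algebra_simps power_add)
    also have "\<dots> \<le> norm (Cf * Cg * (2 * (x^0 * w x) + 2 * (x^d * w x) + x^M * w x + x^(d+M) * w x))" by simp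
    finally show "norm (poly f x * poly g (x powr \<theta>) * w x)
     \<le> norm (Cf * Cg * (2 * (x^0 * w x) + 2 * (x^d * w x) + x^M * w x + x^(d+M) * w x))" .
  qed
qed

lemma B_add1: "B (f1 + f2) g = B f1 g + B f2 g"
  unfolding B_def using set_integral_add(2)[OF integ[of f1 g] integ[of f2 g]]
  by (simp add: algebra_simps)

lemma B_add2: "B f (g1 + g2) = B f g1 + B f g2"
  unfolding B_def using set_integral_add(2)[OF integ[of f g1] integ[of f g2]]
  by (simp add: algebra_simps)

lemma B_smult1: "B (smult c f) g = c * B f g"
proof -
  have "B (smult c f) g = (LINT x:{0<..}|lborel. c * (poly f x * poly g (x powr \<theta>) * w x))"
    unfolding B_def by (simp add: algebra_simps)
  also have "\<dots> = c * B f g" unfolding B_def by (rule set_integral_mult_right)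
  finally show ?thesis .
qed

lemma B_smult2: "B f (smult c g) = c * B f g"
proof -
  have "B f (smult c g) = (LINT x:{0<..}|lborel. c * (poly f x * poly g (x powr \<theta>) * w x))"
    unfolding B_def by (simp add: algebra_simps)
  also have "\<dots> = c * B f g" unfolding B_def by (rule set_integral_mult_right)
  finally show ?thesis .
qed

lemma B_zero1: "B 0 g = 0" unfolding B_def by simp
lemma B_zero2: "B f 0 = 0" unfolding B_def by simp

lemma B_sum1: "B (\<Sum>i\<in>I. F i) g = (\<Sum>i\<in>I. B (F i) g)"
  by (induction I rule: infinite_finite_induct) (auto simp: B_zero1 B_add1)

lemma B_sum2: "B f (\<Sum>i\<in>I. G i) = (\<Sum>i\<in>I. B f (G i))"
  by (induction I rule: infinite_finite_induct) (auto simp: B_zero2 B_add2)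

lemma B_shift:
  assumes "\<theta> * real b = real a"
  shows "B (monom 1 a * f) g = B f (monom 1 b * g)"
  unfolding B_def
proof (rule set_lebesgue_integral_cong)
  show "{0::real<..} \<in> sets lborel" by simp
  show "\<forall>x. x \<in> {0<..} \<longrightarrow> poly (monom 1 a * f) x * poly g (x powr \<theta>) * w x =
         poly f x * poly (monom 1 b * g) (x powr \<theta>) * w x"
  proof (intro allI impI)
    fix x :: real assume "x \<in> {0<..}"
    then have x: "x > 0" by simp
    have "(x powr \<theta>)^b = x powr (\<theta> * b)" using x by (simp add: powr_realpow[symmetric] powr_powr)
    also have "\<dots> = x^a" using assms x by (simp add: powr_realpow)
    finally have "(x powr \<theta>)^b = x^a" .
    then show "poly (monom 1 a * f) x * poly g (x powr \<theta>) * w x =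
         poly f x * poly (monom 1 b * g) (x powr \<theta>) * w x" by (simp add: poly_monom)
  qed
qed

end

lemma span_poly:
  fixes P :: "nat \<Rightarrow> 'a::field poly"
  assumes dP: "\<And>m. degree (P m) = m" and nz: "\<And>m. P m \<noteq> 0"
  shows "degree f \<le> N \<Longrightarrow> \<exists>c. f = (\<Sum>m\<le>N. smult (c m) (P m))"
proof (induction N arbitrary: f)
  case 0
  then obtain c0 where f: "f = [:c0:]" by (metis degree0_coeffs le_zero_eq)
  obtain d0 where P0: "P 0 = [:d0:]" using dP[of 0] by (metis degree0_coeffs)
  with nz[of 0] have "d0 \<noteq> 0" by auto
  then have "f = smult (c0 / d0) (P 0)" using f P0 by simp
  then show ?case by (intro exI[of _ "\<lambda>_. c0/d0"]) simp
next
  case (Suc N)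
  define f' where "f' = f - smult (coeff f (Suc N) / lead_coeff (P (Suc N))) (P (Suc N))"
  have lc: "lead_coeff (P (Suc N)) \<noteq> 0" using nz by simp
  have "degree f' \<le> N"
  proof (rule degree_le)
    show "\<forall>i>N. coeff f' i = 0"
    proof (intro allI impI)
      fix i assume i: "i > N"
      show "coeff f' i = 0"
      proof (cases "i = Suc N")
        case True then show ?thesis using lc dP[of "Suc N"] by (simp add: f'_def)
      next
        case False
        then have "i > Suc N" using i by simp
        then have "coeff f i = 0" "coeff (P (Suc N)) i = 0" using Suc.prems dP[of "Suc N"]
          by (auto intro!: coeff_eq_0)
        then show ?thesis by (simp add: f'_def)
      qed
    qed
  qed
  then obtain c where c: "f' = (\<Sum>m\<le>N. smult (c m) (P m))" using Suc.IH by blast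
  define c' where "c' = c(Suc N := coeff f (Suc N) / lead_coeff (P (Suc N)))"
  have "f = f' + smult (coeff f (Suc N) / lead_coeff (P (Suc N))) (P (Suc N))" by (simp add: f'_def)
  also have "\<dots> = (\<Sum>m\<le>Suc N. smult (c' m) (P m))"
    unfolding c c'_def by (simp add: atMost_Suc)
  finally show ?case by blast
qed



lemma reidx:
  fixes F :: "nat \<Rightarrow> 'a::comm_monoid_add"
  assumes z: "\<And>m. m + c < k \<Longrightarrow> F m = 0"
  shows "(\<Sum>m\<le>k+a. F m) = (\<Sum>j=0..a+c. if j \<le> k+a then F (k+a-j) else 0)"
proof -
  have "(\<Sum>m\<le>k+a. F m) = (\<Sum>m=0..k+a. F m)" by (simp add: atMost_atLeast0)
  also have "\<dots> = (\<Sum>j=0..k+a. F (k+a-j))" by (subst sum.atLeastAtMost_rev) simp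
  also have "\<dots> = (\<Sum>j=0..k+a. if j \<le> a+c then F (k+a-j) else 0)"
    by (rule sum.cong) (auto intro!: z)
  also have "\<dots> = (\<Sum>j\<in>{j\<in>{0..k+a}. j \<le> a+c}. F (k+a-j))" by (rule sum.inter_filter[symmetric]) simp
  also have "{j\<in>{0..k+a}. j \<le> a+c} = {j\<in>{0..a+c}. j \<le> k+a}" by auto
  also have "(\<Sum>j\<in>{j\<in>{0..a+c}. j \<le> k+a}. F (k+a-j)) = (\<Sum>j=0..a+c. if j \<le> k+a then F (k+a-j) else 0)"
    by (rule sum.inter_filter) simp
  finally show ?thesis .
qed

locale bio = bi + fixes p q :: "nat \<Rightarrow> real poly" and a b :: nat
  assumes dp: "\<And>j. degree (p j) = j" and dq: "\<And>j. degree (q j) = j"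
    and pnz: "\<And>j. p j \<noteq> 0" and qnz: "\<And>j. q j \<noteq> 0"
    and orth: "\<And>j k. B (p j) (q k) = (if j = k then 1 else 0)"
    and ab: "\<theta> * real b = real a"
begin

lemma exp_p: "degree f \<le> N \<Longrightarrow> f = (\<Sum>m\<le>N. smult (B f (q m)) (p m))"
proof -
  assume "degree f \<le> N"
  then obtain c where c: "f = (\<Sum>m\<le>N. smult (c m) (p m))" using span_poly[OF dp pnz] by blast
  have "B f (q m') = c m'" if "m' \<le> N" for m'
  proof -
    have "B f (q m') = (\<Sum>m\<le>N. c m * (if m = m' then 1 else 0))"
      unfolding c by (simp add: B_sum1 B_smult1 orth)
    also have "\<dots> = c m'" using that by (simp add: if_distrib cong: if_cong)
    finally show ?thesis .
  qed
  then show ?thesis by (subst c) (auto intro!: sum.cong)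
qed

lemma exp_q: "degree g \<le> N \<Longrightarrow> g = (\<Sum>m\<le>N. smult (B (p m) g) (q m))"
proof -
  assume "degree g \<le> N"
  then obtain c where c: "g = (\<Sum>m\<le>N. smult (c m) (q m))" using span_poly[OF dq qnz] by blast
  have "B (p m') g = c m'" if "m' \<le> N" for m'
  proof -
    have "B (p m') g = (\<Sum>m\<le>N. c m * (if m' = m then 1 else 0))"
      unfolding c by (simp add: B_sum2 B_smult2 orth)
    also have "\<dots> = c m'" using that by (simp add: if_distrib cong: if_cong)
    finally show ?thesis .
  qed
  then show ?thesis by (subst c) (auto intro!: sum.cong)
qed

lemma deg_mon: "degree (monom (1::real) n * f) \<le> n + degree f"
proof -
  have "degree (monom (1::real) n * f) \<le> degree (monom (1::real) n) + degree f" by (rule degree_mult_le)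
  then show ?thesis using degree_monom_le[of "1::real" n] by linarith
qed

lemma zero_p: "m + b < k \<Longrightarrow> B (monom 1 a * p k) (q m) = 0"
proof -
  assume mk: "m + b < k"
  have "B (monom 1 a * p k) (q m) = B (p k) (monom 1 b * q m)" using B_shift[OF ab] .
  also have "monom 1 b * q m = (\<Sum>i\<le>b+m. smult (B (p i) (monom 1 b * q m)) (q i))"
    using deg_mon[of b "q m"] dq[of m] by (intro exp_q) simp
  also have "B (p k) \<dots> = 0" using mk by (simp add: B_sum2 B_smult2 orth)
  finally show ?thesis .
qed

lemma zero_q: "m + a < k \<Longrightarrow> B (p m) (monom 1 b * q k) = 0"
proof -
  assume mk: "m + a < k"
  have "B (p m) (monom 1 b * q k) = B (monom 1 a * p m) (q k)" using B_shift[OF ab] by simp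
  also have "monom 1 a * p m = (\<Sum>i\<le>a+m. smult (B (monom 1 a * p m) (q i)) (p i))"
    using deg_mon[of a "p m"] dp[of m] by (intro exp_p) simp
  also have "B \<dots> (q k) = 0" using mk by (simp add: B_sum1 B_smult1 orth)
  finally show ?thesis .
qed

lemma rec_p: "monom 1 a * p k = (\<Sum>j=0..a+b. if j \<le> k + a then
    smult (B (monom 1 a * p k) (q (k+a-j))) (p (k + a - j)) else 0)"
proof -
  have "monom 1 a * p k = (\<Sum>m\<le>k+a. smult (B (monom 1 a * p k) (q m)) (p m))"
    using deg_mon[of a "p k"] dp[of k] by (intro exp_p) simp
  also have "\<dots> = (\<Sum>j=0..a+b. if j \<le> k + a then
    smult (B (monom 1 a * p k) (q (k+a-j))) (p (k + a - j)) else 0)"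
    by (rule reidx) (simp add: zero_p)
  finally show ?thesis .
qed

lemma rec_q: "monom 1 b * q k = (\<Sum>j=0..a+b. if j \<le> k + b then
    smult (B (p (k+b-j)) (monom 1 b * q k)) (q (k + b - j)) else 0)"
proof -
  have "monom 1 b * q k = (\<Sum>m\<le>k+b. smult (B (p m) (monom 1 b * q k)) (q m))"
    using deg_mon[of b "q k"] dq[of k] by (intro exp_q) simp
  also have "\<dots> = (\<Sum>j=0..b+a. if j \<le> k + b then
    smult (B (p (k+b-j)) (monom 1 b * q k)) (q (k + b - j)) else 0)"
    by (rule reidx) (simp add: zero_q)
  finally show ?thesis by (simp add: add.commute)
qed

lemma rel: "j \<le> a + b \<Longrightarrow> j \<le> k + a \<Longrightarrow>
  B (monom 1 a * p k) (q (k+a-j)) = B (p ((k+a-j)+b-(a+b-j))) (monom 1 b * q (k+a-j))"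
proof -
  assume "j \<le> a + b" "j \<le> k + a"
  then have "(k+a-j)+b-(a+b-j) = k" by simp
  then show ?thesis using B_shift[OF ab] by simp
qed

end

lemma mp_add: "map_poly complex_of_real (f+g) = map_poly of_real f + map_poly of_real g"
  by (intro poly_eqI) (simp add: coeff_map_poly)
lemma mp_mult: "map_poly complex_of_real (f*g) = map_poly of_real f * map_poly of_real g"
  by (intro poly_eqI) (simp add: coeff_map_poly coeff_mult)
lemma cpoly_add: "cpoly (f+g) z = cpoly f z + cpoly g z" by (simp add: cpoly_def mp_add)
lemma cpoly_mult: "cpoly (f*g) z = cpoly f z * cpoly g z" by (simp add: cpoly_def mp_mult)
lemma cpoly_zero: "cpoly 0 z = 0" by (simp add: cpoly_def)
lemma cpoly_smult: "cpoly (smult c f) z = of_real c * cpoly f z" by (simp add: cpoly_def map_poly_smult)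
lemma cpoly_monom: "cpoly (monom 1 n) z = z ^ n" by (simp add: cpoly_def map_poly_monom poly_monom)
lemma cpoly_sum: "cpoly (\<Sum>i\<in>I. F i) z = (\<Sum>i\<in>I. cpoly (F i) z)"
  by (induction I rule: infinite_finite_induct) (auto simp: cpoly_zero cpoly_add)


lemma split3:
  fixes G :: "nat \<Rightarrow> 'a::comm_monoid_add"
  shows "(\<Sum>j=0..a+b. G j) = (\<Sum>l=1..a. G (a-l)) + G a + (\<Sum>l=1..b. G (a+l))"
proof (induction b)
  case 0
  have "(\<Sum>j=0..a. G j) = (\<Sum>j=0..<a. G j) + G a"
    by (simp add: atLeastLessThanSuc_atLeastAtMost[symmetric])
  also have "(\<Sum>j=0..<a. G j) = (\<Sum>l=Suc 0..a. G (a-l))"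
    by (subst sum.atLeastLessThan_rev_at_least_Suc_atMost) simp
  finally show ?case by simp
next
  case (Suc b)
  have "(\<Sum>j=0..a+Suc b. G j) = (\<Sum>j=0..a+b. G j) + G (a + Suc b)"
    by simp
  also have "(\<Sum>l=1..Suc b. G (a+l)) = (\<Sum>l=1..b. G (a+l)) + G (a + Suc b)"
    by simp
  ultimately show ?case using Suc.IH by (simp add: add.assoc)
qed

lemma window:
  fixes T :: "nat \<Rightarrow> 'a::ab_group_add"
  assumes "l \<ge> 1"
  shows "(\<Sum>k\<in>{Suc n - l..<Suc n}. T k) = (\<Sum>k\<in>{n-l..<n}. T k) + T n - (if l \<le> n then T (n-l) else 0)"
proof (cases "l \<le> n")
  case True
  have e: "Suc n - l = Suc (n - l)" using True by simp
  have "(\<Sum>k\<in>{n-l..<Suc n}. T k) = T (n-l) + (\<Sum>k\<in>{Suc (n-l)..<Suc n}. T k)"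
    by (rule sum.atLeast_Suc_lessThan) simp
  moreover have "(\<Sum>k\<in>{n-l..<Suc n}. T k) = (\<Sum>k\<in>{n-l..<n}. T k) + T n"
    by (rule sum.atLeastLessThan_Suc) simp
  ultimately show ?thesis using True unfolding e by (simp add: algebra_simps)
next
  case False
  then have "Suc n - l = 0" "n - l = 0" using assms by auto
  then show ?thesis using False by simp
qed

lemma CD:
  fixes P Q :: "nat \<Rightarrow> complex" and u v :: "nat \<Rightarrow> nat \<Rightarrow> real" and X Z :: complex
  assumes R1: "\<And>k. X * P k = (\<Sum>j=0..a+b. if j \<le> k+a then of_real (u j k) * P (k+a-j) else 0)"
    and R2: "\<And>k. Z * Q k = (\<Sum>j=0..a+b. if j \<le> k+b then of_real (v j k) * Q (k+b-j) else 0)"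
    and R3: "\<And>k j. j \<le> a+b \<and> j \<le> k+a \<longrightarrow> u j k = v (a+b-j) (k+a-j)"
  shows "(X - Z) * (\<Sum>k<n. P k * Q k) =
     (\<Sum>l=1..a. \<Sum>k\<in>{n-l..<n}. of_real (u (a-l) k) * P (k+l) * Q k)
   - (\<Sum>l=1..b. \<Sum>k\<in>{n-l..<n}. of_real (u (a+l) (k+l)) * P k * Q (k+l))"
proof (induction n)
  case 0
  then show ?case by simp
next
  case (Suc n)
  define TA where "TA l k = of_real (u (a-l) k) * P (k+l) * Q k" for l k
  define TB where "TB l k = of_real (u (a+l) (k+l)) * P k * Q (k+l)" for l k
  define S1 where "S1 = (\<Sum>l=1..a. of_real (u (a-l) n) * P (n+l))"
  define S3 where "S3 = (\<Sum>l=1..b. if l \<le> n then of_real (u (a+l) n) * P (n-l) else 0)"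
  define S1' where "S1' = (\<Sum>l=1..b. of_real (u (a+l) (n+l)) * Q (n+l))"
  define S3' where "S3' = (\<Sum>l=1..a. if l \<le> n then of_real (u (a-l) (n-l)) * Q (n-l) else 0)"
  have A: "(\<Sum>l=1..a. \<Sum>k\<in>{Suc n-l..<Suc n}. TA l k) =
      (\<Sum>l=1..a. \<Sum>k\<in>{n-l..<n}. TA l k) + S1 * Q n - P n * S3'"
  proof -
    have "(\<Sum>l=1..a. \<Sum>k\<in>{Suc n-l..<Suc n}. TA l k) =
      (\<Sum>l=1..a. (\<Sum>k\<in>{n-l..<n}. TA l k) + TA l n - (if l \<le> n then TA l (n-l) else 0))"
      by (rule sum.cong[OF refl]) (rule window, simp)
    also have "\<dots> = (\<Sum>l=1..a. \<Sum>k\<in>{n-l..<n}. TA l k) + (\<Sum>l=1..a. TA l n)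
        - (\<Sum>l=1..a. if l \<le> n then TA l (n-l) else 0)"
      by (simp add: sum.distrib sum_subtractf)
    also have "(\<Sum>l=1..a. TA l n) = S1 * Q n"
      unfolding S1_def TA_def by (simp add: sum_distrib_right)
    also have "(\<Sum>l=1..a. if l \<le> n then TA l (n-l) else 0) = P n * S3'"
      unfolding S3'_def TA_def sum_distrib_left by (rule sum.cong) (auto simp: algebra_simps)
    finally show ?thesis .
  qed
  have Bp: "(\<Sum>l=1..b. \<Sum>k\<in>{Suc n-l..<Suc n}. TB l k) =
      (\<Sum>l=1..b. \<Sum>k\<in>{n-l..<n}. TB l k) + P n * S1' - S3 * Q n"
  proof -
    have "(\<Sum>l=1..b. \<Sum>k\<in>{Suc n-l..<Suc n}. TB l k) =
      (\<Sum>l=1..b. (\<Sum>k\<in>{n-l..<n}. TB l k) + TB l n - (if l \<le> n then TB l (n-l) else 0))"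
      by (rule sum.cong[OF refl]) (rule window, simp)
    also have "\<dots> = (\<Sum>l=1..b. \<Sum>k\<in>{n-l..<n}. TB l k) + (\<Sum>l=1..b. TB l n)
        - (\<Sum>l=1..b. if l \<le> n then TB l (n-l) else 0)"
      by (simp add: sum.distrib sum_subtractf)
    also have "(\<Sum>l=1..b. TB l n) = P n * S1'"
      unfolding S1'_def TB_def sum_distrib_left by (rule sum.cong) (auto simp: algebra_simps)
    also have "(\<Sum>l=1..b. if l \<le> n then TB l (n-l) else 0) = S3 * Q n"
      unfolding S3_def TB_def sum_distrib_right by (rule sum.cong) (auto simp: algebra_simps)
    finally show ?thesis .
  qed
  have X: "X * P n = S1 + of_real (u a n) * P n + S3"
  proof -
    have "X * P n = (\<Sum>j=0..a+b. if j \<le> n+a then of_real (u j n) * P (n+a-j) else 0)" by (rule R1)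
    also have "\<dots> = S1 + of_real (u a n) * P n + S3"
      unfolding split3 S1_def S3_def
      by (intro arg_cong2[where f="(+)"] sum.cong) (auto simp: add.commute)
    finally show ?thesis .
  qed
  have Zq: "Z * Q n = S1' + of_real (u a n) * Q n + S3'"
  proof -
    have "Z * Q n = (\<Sum>j=0..b+a. if j \<le> n+b then of_real (v j n) * Q (n+b-j) else 0)"
      using R2[of n] by (simp add: add.commute)
    also have "\<dots> = S1' + of_real (u a n) * Q n + S3'"
      unfolding split3 S1'_def S3'_def
    proof (intro arg_cong2[where f="(+)"] sum.cong refl)
      fix l assume l: "l \<in> {1..b}"
      then have "u (a+l) (n+l) = v (b-l) n" using R3[of "a+l" "n+l"] by auto
      then show "(if b - l \<le> n + b then complex_of_real (v (b - l) n) * Q (n + b - (b - l)) else 0) =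
          complex_of_real (u (a + l) (n + l)) * Q (n + l)" using l by auto
    next
      show "(if b \<le> n + b then complex_of_real (v b n) * Q (n + b - b) else 0) =
         complex_of_real (u a n) * Q n" using R3[of a n] by simp
    next
      fix l assume l: "l \<in> {1..a}"
      show "(if b + l \<le> n + b then complex_of_real (v (b + l) n) * Q (n + b - (b + l)) else 0) =
         (if l \<le> n then complex_of_real (u (a - l) (n - l)) * Q (n - l) else 0)"
      proof (cases "l \<le> n")
        case True
        then have "u (a-l) (n-l) = v (b+l) n" using R3[of "a-l" "n-l"] l
          by (auto simp: algebra_simps)
        then show ?thesis using True by auto
      qed auto
    qed
    finally show ?thesis .
  qed
  have "(\<Sum>k<Suc n. P k * Q k) = (\<Sum>k<n. P k * Q k) + P n * Q n" by simp
  then have "(X - Z) * (\<Sum>k<Suc n. P k * Q k) = (X - Z) * (\<Sum>k<n. P k * Q k) + (X * P n) * Q n - P n * (Z * Q n)"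
    by (simp add: algebra_simps)
  also have "\<dots> = ((\<Sum>l=1..a. \<Sum>k\<in>{n-l..<n}. TA l k) - (\<Sum>l=1..b. \<Sum>k\<in>{n-l..<n}. TB l k))
      + (S1 + of_real (u a n) * P n + S3) * Q n - P n * (S1' + of_real (u a n) * Q n + S3')"
    unfolding X Zq Suc.IH TA_def TB_def by simp
  also have "\<dots> = (\<Sum>l=1..a. \<Sum>k\<in>{Suc n-l..<Suc n}. TA l k) - (\<Sum>l=1..b. \<Sum>k\<in>{Suc n-l..<Suc n}. TB l k)"
    unfolding A Bp by (simp add: algebra_simps)
  finally show ?case unfolding TA_def TB_def .
qed
theorem theorem1p1:
  fixes a b :: nat and w :: "real \<Rightarrow> real" and p q :: "nat \<Rightarrow> real poly"
  defines "\<theta> \<equiv> real a / real b"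
  assumes "0 < b" and "b < a"
    and w_pos: "\<And>x. x > 0 \<Longrightarrow> w x > 0"
    and w_mom: "\<And>k::nat. set_integrable lborel {0<..} (\<lambda>x. x ^ k * w x)"
    and deg_p: "\<And>j. degree (p j) = j" and deg_q: "\<And>j. degree (q j) = j"
    and lc_eq: "\<And>j. lead_coeff (p j) = lead_coeff (q j)"
    and lc_pos: "\<And>j. lead_coeff (p j) > 0"
    and biorth: "\<And>j k. (LINT x:{0<..}|lborel. poly (p j) x * poly (q k) (x powr \<theta>) * w x)
                      = (if j = k then 1 else 0)"
  shows "\<exists>u v :: nat \<Rightarrow> nat \<Rightarrow> real.
     (\<forall>k. monom 1 a * p k =
            (\<Sum>j=0..a+b. if j \<le> k + a then smult (u j k) (p (k + a - j)) else 0))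
   \<and> (\<forall>k. monom 1 b * q k =
            (\<Sum>j=0..a+b. if j \<le> k + b then smult (v j k) (q (k + b - j)) else 0))
   \<and> (\<forall>k j. j \<le> a + b \<and> j \<le> k + a \<longrightarrow> u j k = v (a + b - j) (k + a - j))
   \<and> (\<forall>n::nat. \<forall>x::complex. \<forall>y::real. n \<ge> 1 \<and> y \<ge> 0 \<and> x ^ a \<noteq> (complex_of_real y) ^ a \<longrightarrow>
        (\<Sum>k<n. cpoly (p k) x * complex_of_real (poly (q k) (y powr \<theta>)))
        = 1 / (x ^ a - (complex_of_real y) ^ a) *
          ((\<Sum>l=1..a. \<Sum>k\<in>{n - l..<n}.
               complex_of_real (u (a - l) k) * cpoly (p (k + l)) x
                 * complex_of_real (poly (q k) (y powr \<theta>)))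
         - (\<Sum>l=1..b. \<Sum>k\<in>{n - l..<n}.
               complex_of_real (u (a + l) (k + l)) * cpoly (p k) x
                 * complex_of_real (poly (q (k + l)) (y powr \<theta>)))))"
  proof -
  have b0: "real b > 0" using assms(2) by simp
  have th0: "\<theta> \<ge> 0" unfolding \<theta>_def by simp
  have ab: "\<theta> * real b = real a" unfolding \<theta>_def using b0 by simp
  interpret bi w \<theta> by unfold_locales (use th0 w_pos w_mom in auto)
  interpret bio w \<theta> p q a b
  proof (unfold_locales)
    show "\<And>j. p j \<noteq> 0" using lc_pos by (metis leading_coeff_0_iff less_irrefl)
    show "\<And>j. q j \<noteq> 0" using lc_pos lc_eq by (metis leading_coeff_0_iff less_irrefl)
    show "\<And>j k. B (p j) (q k) = (if j = k then 1 else 0)"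
      unfolding B_def by (rule biorth)
  qed (use th0 w_pos w_mom deg_p deg_q ab in auto)
  define u where "u j k = B (monom 1 a * p k) (q (k+a-j))" for j k
  define v where "v j k = B (p (k+b-j)) (monom 1 b * q k)" for j k
  have c1: "\<forall>k. monom 1 a * p k =
            (\<Sum>j=0..a+b. if j \<le> k + a then smult (u j k) (p (k + a - j)) else 0)"
    unfolding u_def using rec_p by blast
  have c2: "\<forall>k. monom 1 b * q k =
            (\<Sum>j=0..a+b. if j \<le> k + b then smult (v j k) (q (k + b - j)) else 0)"
    unfolding v_def using rec_q by blast
  have c3: "\<forall>k j. j \<le> a + b \<and> j \<le> k + a \<longrightarrow> u j k = v (a + b - j) (k + a - j)"
    unfolding u_def v_def using rel by blast
  have c4: "\<forall>n::nat. \<forall>x::complex. \<forall>y::real. n \<ge> 1 \<and> y \<ge> 0 \<and> x ^ a \<noteq> (complex_of_real y) ^ a \<longrightarrow>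
        (\<Sum>k<n. cpoly (p k) x * complex_of_real (poly (q k) (y powr \<theta>)))
        = 1 / (x ^ a - (complex_of_real y) ^ a) *
          ((\<Sum>l=1..a. \<Sum>k\<in>{n - l..<n}.
               complex_of_real (u (a - l) k) * cpoly (p (k + l)) x
                 * complex_of_real (poly (q k) (y powr \<theta>)))
         - (\<Sum>l=1..b. \<Sum>k\<in>{n - l..<n}.
               complex_of_real (u (a + l) (k + l)) * cpoly (p k) x
                 * complex_of_real (poly (q (k + l)) (y powr \<theta>))))"
  proof (intro allI impI)
    fix n :: nat and x :: complex and y :: real
    assume H: "n \<ge> 1 \<and> y \<ge> 0 \<and> x ^ a \<noteq> (complex_of_real y) ^ a"
    define Y where "Y = y powr \<theta>"
    have Yb: "Y ^ b = y ^ a"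
    proof (cases "y = 0")
      case True then show ?thesis using assms(2,3) unfolding Y_def by (simp add: zero_power)
    next
      case False
      then have y: "y > 0" using H by simp
      have "Y ^ b = y powr (\<theta> * b)" unfolding Y_def using y by (simp add: powr_realpow[symmetric] powr_powr)
      also have "\<dots> = y ^ a" using ab y by (simp add: powr_realpow)
      finally show ?thesis .
    qed
    have R1: "x ^ a * cpoly (p k) x = (\<Sum>j=0..a+b. if j \<le> k+a then of_real (u j k) * cpoly (p (k+a-j)) x else 0)" for k
    proof -
      have "cpoly (monom 1 a * p k) x = cpoly (\<Sum>j=0..a+b. if j \<le> k + a then smult (u j k) (p (k + a - j)) else 0) x"
        using c1 by metis
      then have "x ^ a * cpoly (p k) x = (\<Sum>j=0..a+b. cpoly (if j \<le> k + a then smult (u j k) (p (k + a - j)) else 0) x)"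
        by (simp add: cpoly_sum cpoly_mult cpoly_monom)
      also have "\<dots> = (\<Sum>j=0..a+b. if j \<le> k+a then of_real (u j k) * cpoly (p (k+a-j)) x else 0)"
        by (rule sum.cong) (auto simp: cpoly_smult cpoly_zero)
      finally show ?thesis .
    qed
    have R2: "complex_of_real (y^a) * complex_of_real (poly (q k) Y) =
        (\<Sum>j=0..a+b. if j \<le> k+b then of_real (v j k) * complex_of_real (poly (q (k+b-j)) Y) else 0)" for k
    proof -
      have "poly (monom 1 b * q k) Y = poly (\<Sum>j=0..a+b. if j \<le> k + b then smult (v j k) (q (k + b - j)) else 0) Y"
        using c2 by metis
      then have "Y^b * poly (q k) Y = (\<Sum>j=0..a+b. if j \<le> k+b then v j k * poly (q (k+b-j)) Y else 0)"
        by (simp add: poly_sum poly_monom) (rule sum.cong, auto)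
      then have "complex_of_real (Y^b * poly (q k) Y) = complex_of_real (\<Sum>j=0..a+b. if j \<le> k+b then v j k * poly (q (k+b-j)) Y else 0)"
        by simp
      then show ?thesis unfolding Yb of_real_sum by (simp add: of_real_mult) (rule sum.cong, auto)
    qed
    have E: "(x^a - complex_of_real (y^a)) * (\<Sum>k<n. cpoly (p k) x * complex_of_real (poly (q k) Y)) =
     (\<Sum>l=1..a. \<Sum>k\<in>{n-l..<n}. of_real (u (a-l) k) * cpoly (p (k+l)) x * complex_of_real (poly (q k) Y))
   - (\<Sum>l=1..b. \<Sum>k\<in>{n-l..<n}. of_real (u (a+l) (k+l)) * cpoly (p k) x * complex_of_real (poly (q (k+l)) Y))"
      using CD[where X="x^a" and Z="complex_of_real (y^a)" and P="\<lambda>k. cpoly (p k) x"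
          and Q="\<lambda>k. complex_of_real (poly (q k) Y)" and u=u and v=v and a=a and b=b and n=n] R1 R2 c3
      by blast
    have nz: "x^a - complex_of_real (y^a) \<noteq> 0" using H by (simp add: of_real_power)
    show "(\<Sum>k<n. cpoly (p k) x * complex_of_real (poly (q k) (y powr \<theta>)))
        = 1 / (x ^ a - (complex_of_real y) ^ a) *
          ((\<Sum>l=1..a. \<Sum>k\<in>{n - l..<n}.
               complex_of_real (u (a - l) k) * cpoly (p (k + l)) x
                 * complex_of_real (poly (q k) (y powr \<theta>)))
         - (\<Sum>l=1..b. \<Sum>k\<in>{n - l..<n}.
               complex_of_real (u (a + l) (k + l)) * cpoly (p k) x
                 * complex_of_real (poly (q (k + l)) (y powr \<theta>))))"
      unfolding Y_def[symmetric] E[symmetric] using nz by (simp add: of_real_power)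
  qed
  show ?thesis using c1 c2 c3 c4 by blast
qed

end
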